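(* Let $\mathcal{V}$ be a finite vocabulary, $L\ge 1$, $\mathbf{m}\notin\mathcal{V}$ a mask token, $\mathcal{Z}:=(\mathcal{V}\cup\{\mathbf{m}\})^L$, and $p_{\mathrm{data}}$ a probability distribution on $\mathcal{V}^L$. Fix an integer $K\ge 1$ and the time grid $t_j:=1-j/K$, $j=0,1,\dots,K$. Let $g_\phi$ be an unmasking policy, i.e. for each $\mathbf{z}\in\mathcal{Z}$ and time $t$, $g_\phi(\cdot\mid\mathbf{z},t)$ is a probability distribution on the masked index set $\mathrm{msk}(\mathbf{z})$. Consider two Markov chains on $\mathcal{Z}$, both started at the fully masked state $(\mathbf{m},\dots,\mathbf{m})$: (1) Idealized inference chain: given $\mathbf{z}_{t_j}$, sample $I_j\sim g_\phi(\cdot\mid\mathbf{z}_{t_j},t_j)$, then sample $V_j\sim p(\mathbf{x}_0^{I_j}=\cdot\mid\mathbf{z}_{t_j})$, and set $\mathbf{z}_{t_{j+1}}:=\mathbf{z}_{t_j}^{(I_j\leftarrow V_j)}$. Let $q_{t_j}$ be the law of $\mathbf{z}_{t_j}$. (2) Teacher-forced chain: first sample $\mathbf{x}_0\sim p_{\mathrm{data}}$ and set $\tilde{\mathbf{z}}_{t_0}=(\mathbf{m},\dots,\mathbf{m})$; given $\tilde{\mathbf{z}}_{t_j}$, sample $I_j\sim g_\phi(\cdot\mid\tilde{\mathbf{z}}_{t_j},t_j)$ and set $\tilde{\mathbf{z}}_{t_{j+1}}:=\tilde{\mathbf{z}}_{t_j}^{(I_j\leftarrow \mathbf{x}_0^{I_j})}$.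 Let $\tilde q_{t_j}$ be the marginal law of $\tilde{\mathbf{z}}_{t_j}$ (after integrating over $\mathbf{x}_0\sim p_{\mathrm{data}}$). Then $q_{t_j}=\tilde q_{t_j}$ for every $j\in\{0,1,\dots,K\}$.
   Context: For $\mathbf{z}\in\mathcal{Z}$, $\mathrm{um}(\mathbf{z}):=\{i\in[L]:\mathbf{z}^i\neq\mathbf{m}\}$ and $\mathrm{msk}(\mathbf{z}):=[L]\setminus\mathrm{um}(\mathbf{z})$. For $i\in[L]$, $v\in\mathcal{V}$, $\mathbf{z}^{(i\leftarrow v)}$ denotes $\mathbf{z}$ with its $i$-th entry replaced by $v$. For $\mathbf{x}_0\sim p_{\mathrm{data}}$, $\mathbf{z}\in\mathcal{Z}$ and $i\in\mathrm{msk}(\mathbf{z})$, the ground-truth unmasking posterior is $p(\mathbf{x}_0^i=v\mid\mathbf{z}):=\mathbb{P}(\mathbf{x}_0^i=v\mid \mathbf{x}_0^{\mathrm{um}(\mathbf{z})}=\mathbf{z}^{\mathrm{um}(\mathbf{z})})$ (for states $\mathbf{z}$ reached with positive probability). The policy $g_\phi$ depends only on the current (partially masked) state and time, not on any hidden clean tokens. *)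

theory Defs
  imports "HOL-Probability.Probability"
begin

text \<open>Positions [L] are a finite type 'n (so L = CARD('n) >= 1); the vocabulary is a
finite type 'v; the mask token m is None, so Z = ('n => 'v option).
A clean sequence in V^L is a function 'n => 'v.\<close>

definition um :: "('n \<Rightarrow> 'v option) \<Rightarrow> 'n set" where
  "um z = {i. z i \<noteq> None}"

definition msk :: "('n \<Rightarrow> 'v option) \<Rightarrow> 'n set" where
  "msk z = UNIV - um z"

definition all_masked :: "'n \<Rightarrow> 'v option" where
  "all_masked = (\<lambda>_. None)"

definition consistent :: "('n \<Rightarrow> 'v option) \<Rightarrow> ('n \<Rightarrow> 'v) set" where
  "consistent z = {x. \<forall>i\<in>um z. z i = Some (x i)}"

text \<open>Ground-truth unmasking posterior p(x0^i = . | z). Only meaningful for states z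
reached with positive probability; for other states an arbitrary (fixed) choice is made.\<close>
definition posterior :: "('n \<Rightarrow> 'v) pmf \<Rightarrow> ('n \<Rightarrow> 'v option) \<Rightarrow> 'n \<Rightarrow> 'v pmf" where
  "posterior pdata z i =
     (if set_pmf pdata \<inter> consistent z \<noteq> {}
      then map_pmf (\<lambda>x. x i) (cond_pmf pdata (consistent z))
      else return_pmf undefined)"

definition tgrid :: "nat \<Rightarrow> nat \<Rightarrow> real" where
  "tgrid K j = 1 - real j / real K"

fun infer_chain ::
  "('n \<Rightarrow> 'v) pmf \<Rightarrow> (('n \<Rightarrow> 'v option) \<Rightarrow> real \<Rightarrow> 'n pmf) \<Rightarrow> nat \<Rightarrow> nat \<Rightarrow> ('n \<Rightarrow> 'v option) pmf"
where
  "infer_chain pdata g K 0 = return_pmf all_masked"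
| "infer_chain pdata g K (Suc j) =
     bind_pmf (infer_chain pdata g K j) (\<lambda>z.
       bind_pmf (g z (tgrid K j)) (\<lambda>i.
         bind_pmf (posterior pdata z i) (\<lambda>v. return_pmf (z(i := Some v)))))"

fun tf_chain ::
  "(('n \<Rightarrow> 'v option) \<Rightarrow> real \<Rightarrow> 'n pmf) \<Rightarrow> nat \<Rightarrow> ('n \<Rightarrow> 'v) \<Rightarrow> nat \<Rightarrow> ('n \<Rightarrow> 'v option) pmf"
where
  "tf_chain g K x0 0 = return_pmf all_masked"
| "tf_chain g K x0 (Suc j) =
     bind_pmf (tf_chain g K x0 j) (\<lambda>z.
       bind_pmf (g z (tgrid K j)) (\<lambda>i. return_pmf (z(i := Some (x0 i)))))"

definition tf_marginal ::
  "('n \<Rightarrow> 'v) pmf \<Rightarrow> (('n \<Rightarrow> 'v option) \<Rightarrow> real \<Rightarrow> 'n pmf) \<Rightarrow> nat \<Rightarrow> nat \<Rightarrow> ('n \<Rightarrow> 'v option) pmf"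
where
  "tf_marginal pdata g K j = bind_pmf pdata (\<lambda>x0. tf_chain g K x0 j)"

end

theory Submission
  imports Defs
begin

lemma cond_cond_pmf:
  fixes p :: "'a::finite pmf"
  assumes ne: "set_pmf p \<inter> (A \<inter> B) \<noteq> {}"
  shows "cond_pmf (cond_pmf p A) B = cond_pmf p (A \<inter> B)"
proof (rule pmf_eqI)
  fix x
  have neA: "set_pmf p \<inter> A \<noteq> {}" using ne by blast
  have neB: "set_pmf (cond_pmf p A) \<inter> B \<noteq> {}" using ne unfolding set_cond_pmf[OF neA] by blast
  have mA: "measure p A \<noteq> 0" by (rule measure_measure_pmf_not_zero[OF neA])
  have "measure (cond_pmf p A) B = (\<Sum>y\<in>B. pmf (cond_pmf p A) y)"
    by (simp add: measure_measure_pmf_finite)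
  also have "\<dots> = (\<Sum>y\<in>B. (if y \<in> A then pmf p y else 0) / measure p A)"
    by (rule sum.cong) (auto simp: pmf_cond[OF neA])
  also have "\<dots> = (\<Sum>y\<in>B. (if y \<in> A then pmf p y else 0)) / measure p A"
    by (simp add: sum_divide_distrib)
  also have "(\<Sum>y\<in>B. (if y \<in> A then pmf p y else 0)) = (\<Sum>y\<in>A \<inter> B. pmf p y)"
    by (simp add: sum.If_cases Int_commute)
  also have "\<dots> = measure p (A \<inter> B)" by (simp add: measure_measure_pmf_finite)
  finally have mB: "measure (cond_pmf p A) B = measure p (A \<inter> B) / measure p A" .
  show "pmf (cond_pmf (cond_pmf p A) B) x = pmf (cond_pmf p (A \<inter> B)) x"
    using mA by (simp add: pmf_cond[OF neB] pmf_cond[OF ne] pmf_cond[OF neA] mB)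
qed

lemma cond_pmf_UNIV': "cond_pmf p UNIV = p"
proof (rule pmf_eqI)
  fix x
  have ne: "set_pmf p \<inter> UNIV \<noteq> {}" using set_pmf_not_empty by auto
  show "pmf (cond_pmf p UNIV) x = pmf p x" by (simp add: pmf_cond[OF ne])
qed

lemma split_pmf:
  "bind_pmf q (\<lambda>x. return_pmf (f (h x), x)) =
   bind_pmf (map_pmf h q) (\<lambda>v. map_pmf (\<lambda>x. (f v, x)) (cond_pmf q {x. h x = v}))"
proof -
  have q: "q = bind_pmf (map_pmf h q) (\<lambda>v. cond_pmf q {x. h x = v})"
    by (rule bind_cond_pmf_cancel[symmetric]) (auto simp: vimage_def)
  have "bind_pmf q (\<lambda>x. return_pmf (f (h x), x)) =
     bind_pmf (map_pmf h q) (\<lambda>v. bind_pmf (cond_pmf q {x. h x = v}) (\<lambda>x. return_pmf (f (h x), x)))"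
    by (subst q) (simp add: bind_assoc_pmf)
  also have "\<dots> = bind_pmf (map_pmf h q) (\<lambda>v. map_pmf (\<lambda>x. (f v, x)) (cond_pmf q {x. h x = v}))"
  proof (rule bind_pmf_cong[OF refl])
    fix v assume v: "v \<in> set_pmf (map_pmf h q)"
    then have ne: "set_pmf q \<inter> {x. h x = v} \<noteq> {}" by auto
    show "bind_pmf (cond_pmf q {x. h x = v}) (\<lambda>x. return_pmf (f (h x), x)) =
          map_pmf (\<lambda>x. (f v, x)) (cond_pmf q {x. h x = v})"
      unfolding map_pmf_def
      by (rule bind_pmf_cong[OF refl]) (use set_cond_pmf[OF ne] in auto)
  qed
  finally show ?thesis .
qed

lemma consistent_upd:
  assumes "x0 \<in> consistent z"
  shows "consistent z \<inter> {x. x i = x0 i} = consistent (z(i := Some (x0 i)))"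
proof
  show "consistent z \<inter> {x. x i = x0 i} \<subseteq> consistent (z(i := Some (x0 i)))"
    unfolding consistent_def um_def by auto
  show "consistent (z(i := Some (x0 i))) \<subseteq> consistent z \<inter> {x. x i = x0 i}"
  proof
    fix x assume x: "x \<in> consistent (z(i := Some (x0 i)))"
    have "\<forall>j. (z(i := Some (x0 i))) j \<noteq> None \<longrightarrow> (z(i := Some (x0 i))) j = Some (x j)"
      using x unfolding consistent_def um_def by blast
    then have xi: "x i = x0 i" by (metis fun_upd_same option.inject option.simps(3))
    have "z j = Some (x j)" if "z j \<noteq> None" for j
    proof (cases "j = i")
      case True
      then show ?thesis using assms that xi unfolding consistent_def um_def by auto
    next
      case False
      then show ?thesis using x that unfolding consistent_def um_def by auto
    qed
    then show "x \<in> consistent z \<inter> {x. x i = x0 i}" using xi unfolding consistent_def um_def by auto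
  qed
qed

theorem proposition1:
  fixes pdata :: "('n::finite \<Rightarrow> 'v::finite) pmf"
    and g :: "('n \<Rightarrow> 'v option) \<Rightarrow> real \<Rightarrow> 'n pmf"
    and K :: nat
  assumes "K \<ge> 1"
    and "\<And>z t. msk z \<noteq> {} \<Longrightarrow> set_pmf (g z t) \<subseteq> msk z"
  shows "\<forall>j \<le> K. infer_chain pdata g K j = tf_marginal pdata g K j"
proof -
  define C where "C z = cond_pmf pdata (consistent z)" for z
  define J where "J j = bind_pmf pdata (\<lambda>x. map_pmf (\<lambda>z. (z, x)) (tf_chain g K x j))" for j
  have main: "(\<forall>z\<in>set_pmf (infer_chain pdata g K j). set_pmf pdata \<inter> consistent z \<noteq> {}) \<and>
     J j = bind_pmf (infer_chain pdata g K j) (\<lambda>z. map_pmf (\<lambda>x. (z, x)) (C z))" for j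
  proof (induction j)
    case 0
    have cu: "consistent all_masked = UNIV" by (simp add: consistent_def um_def all_masked_def)
    have "J 0 = map_pmf (\<lambda>x. (all_masked, x)) pdata"
      by (simp add: J_def map_pmf_def bind_return_pmf)
    also have "\<dots> = bind_pmf (infer_chain pdata g K 0) (\<lambda>z. map_pmf (\<lambda>x. (z, x)) (C z))"
      by (simp add: C_def cu bind_return_pmf cond_pmf_UNIV')
    finally show ?case using set_pmf_not_empty[of pdata] by (simp add: cu)
  next
    case (Suc j)
    let ?t = "tgrid K j"
    have ne: "set_pmf pdata \<inter> consistent z \<noteq> {}" if "z \<in> set_pmf (infer_chain pdata g K j)" for z
      using Suc.IH that by blast
    have post: "posterior pdata z i = map_pmf (\<lambda>x. x i) (C z)"
      if "z \<in> set_pmf (infer_chain pdata g K j)" for z i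
      using ne[OF that] by (simp add: posterior_def C_def)
    have inv: "\<forall>z\<in>set_pmf (infer_chain pdata g K (Suc j)). set_pmf pdata \<inter> consistent z \<noteq> {}"
    proof
      fix z' assume "z' \<in> set_pmf (infer_chain pdata g K (Suc j))"
      then obtain z i v where z: "z \<in> set_pmf (infer_chain pdata g K j)"
        and v: "v \<in> set_pmf (posterior pdata z i)" and z': "z' = z(i := Some v)"
        by auto
      from v obtain x where x: "x \<in> set_pmf pdata" "x \<in> consistent z" and xv: "v = x i"
        using v set_cond_pmf[OF ne[OF z]] by (auto simp: post[OF z] C_def)
      have "x \<in> consistent z'" using consistent_upd[OF x(2), of i] x(2) z' xv by blast
      then show "set_pmf pdata \<inter> consistent z' \<noteq> {}" using x by blast
    qed
    have "J (Suc j) = bind_pmf (J j) (\<lambda>(z, x). bind_pmf (g z ?t) (\<lambda>i. return_pmf (z(i := Some (x i)), x)))"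
      by (simp add: J_def bind_assoc_pmf map_pmf_def bind_return_pmf)
    also have "\<dots> = bind_pmf (infer_chain pdata g K j) (\<lambda>z. bind_pmf (C z) (\<lambda>x.
        bind_pmf (g z ?t) (\<lambda>i. return_pmf (z(i := Some (x i)), x))))"
      using Suc.IH by (simp add: bind_assoc_pmf map_pmf_def bind_return_pmf)
    also have "\<dots> = bind_pmf (infer_chain pdata g K j) (\<lambda>z. bind_pmf (g z ?t) (\<lambda>i.
        bind_pmf (C z) (\<lambda>x. return_pmf (z(i := Some (x i)), x))))"
      by (simp add: bind_commute_pmf[of "C _"])
    also have "\<dots> = bind_pmf (infer_chain pdata g K j) (\<lambda>z. bind_pmf (g z ?t) (\<lambda>i.
        bind_pmf (posterior pdata z i) (\<lambda>v. map_pmf (\<lambda>x. (z(i := Some v), x)) (C (z(i := Some v))))))"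
    proof (intro bind_pmf_cong refl)
      fix z i assume z: "z \<in> set_pmf (infer_chain pdata g K j)"
      have "bind_pmf (C z) (\<lambda>x. return_pmf (z(i := Some (x i)), x)) =
        bind_pmf (map_pmf (\<lambda>x. x i) (C z)) (\<lambda>v. map_pmf (\<lambda>x. (z(i := Some v), x)) (cond_pmf (C z) {x. x i = v}))"
        by (rule split_pmf)
      also have "\<dots> = bind_pmf (posterior pdata z i) (\<lambda>v. map_pmf (\<lambda>x. (z(i := Some v), x)) (C (z(i := Some v))))"
        unfolding post[OF z]
      proof (intro bind_pmf_cong refl)
        fix v assume "v \<in> set_pmf (map_pmf (\<lambda>x. x i) (C z))"
        then obtain x where x: "x \<in> set_pmf pdata" "x \<in> consistent z" and xv: "v = x i"
          using set_cond_pmf[OF ne[OF z]] by (auto simp: C_def)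
        have ne2: "set_pmf pdata \<inter> (consistent z \<inter> {y. y i = x i}) \<noteq> {}" using x by blast
        show "map_pmf (\<lambda>x. (z(i := Some v), x)) (cond_pmf (C z) {x. x i = v}) =
              map_pmf (\<lambda>x. (z(i := Some v), x)) (C (z(i := Some v)))"
          unfolding C_def xv cond_cond_pmf[OF ne2] consistent_upd[OF x(2)] ..
      qed
      finally show "bind_pmf (C z) (\<lambda>x. return_pmf (z(i := Some (x i)), x)) =
        bind_pmf (posterior pdata z i) (\<lambda>v. map_pmf (\<lambda>x. (z(i := Some v), x)) (C (z(i := Some v))))" .
    qed
    also have "\<dots> = bind_pmf (infer_chain pdata g K (Suc j)) (\<lambda>z. map_pmf (\<lambda>x. (z, x)) (C z))"
      by (simp add: bind_assoc_pmf bind_return_pmf)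
    finally show ?case using inv by simp
  qed
  show ?thesis
  proof (intro allI impI)
    fix j
    have "tf_marginal pdata g K j = map_pmf fst (J j)"
      by (simp add: tf_marginal_def J_def map_bind_pmf pmf.map_comp o_def)
    also have "\<dots> = bind_pmf (infer_chain pdata g K j) (\<lambda>z. map_pmf (\<lambda>x. z) (C z))"
      using main[of j] by (simp add: map_bind_pmf pmf.map_comp o_def)
    also have "\<dots> = infer_chain pdata g K j"
      by (simp add: map_pmf_const bind_return_pmf')
    finally show "infer_chain pdata g K j = tf_marginal pdata g K j" by simp
  qed
qed

end
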